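(* Consider a Markov decision process with finite state set $S$, finite action set $A$, transition kernel $T(s'\mid s,a)$, initial state distribution $p_0$ and discount factor $\gamma\in[0,1)$. Let $\beta>0$, $\alpha\in[0,1)$, let $\mu^U(a\mid s)$ be a policy with $\mu^U(a\mid s)>0$ for all $(s,a)$, let $d^U$ be a probability distribution on $S\times A$, and let $\Psi:S\times A\to\mathbb{R}$ be any function. For $Q:S\times A\to\mathbb{R}$ and a policy $\pi$ define $$V_Q^\pi(s)=\mathbb{E}_{a\sim\pi(\cdot\mid s)}\Big[Q(s,a)-\beta\log\frac{\pi(a\mid s)}{\mu^U(a\mid s)}\Big],\qquad \mathcal{T}^\pi[Q](s,a)=Q(s,a)-\gamma\,\mathbb{E}_{s'\sim T(\cdot\mid s,a)}\big[V_Q^\pi(s')\big],$$ $$L(Q,\pi)=(1-\gamma)\,\mathbb{E}_{s\sim p_0}\big[V_Q^\pi(s)\big]+(1-\alpha)\,\mathbb{E}_{(s,a)\sim d^U}\Big[\exp\Big(\frac{\Psi(s,a)-\mathcal{T}^\pi[Q](s,a)}{1-\alpha}\Big)\Big],$$ and, with $\delta(s,a)=\exp\big(\frac{\Psi(s,a)}{1-\alpha}\big)$, $$\widetilde{L}(Q,\pi)=(1-\gamma)\,\mathbb{E}_{s\sim p_0}\big[V_Q^\pi(s)\big]-\mathbb{E}_{(s,a)\sim d^U}\big[\delta(s,a)\,\mathcal{T}^\pi[Q](s,a)\big]+(1-\alpha)\,\mathbb{E}_{(s,a)\sim d^U}\big[\delta(s,a)\big].$$ Then $\widetilde{L}(Q,\pi)\le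 L(Q,\pi)$ for all $Q$ and $\pi$, with equality when $\mathcal{T}^\pi[Q](s,a)=0$ for all $(s,a)$.
   Context: In the paper, $\mu^U$ is the behavior policy of the union dataset, $d^U$ its state-action distribution, and $\Psi(s,a)=\log\frac{d^G(s,a)}{d^U(s,a)}-\alpha\log\frac{d^B(s,a)}{d^U(s,a)}$; the result holds for any real-valued $\Psi$. *)

theory Defs
  imports "HOL-Analysis.Analysis"
begin

definition is_dist :: "('x::finite \<Rightarrow> real) \<Rightarrow> bool" where
  "is_dist p \<longleftrightarrow> (\<forall>x. 0 \<le> p x) \<and> (\<Sum>x\<in>UNIV. p x) = 1"

definition is_policy :: "('s \<Rightarrow> 'a::finite \<Rightarrow> real) \<Rightarrow> bool" where
  "is_policy \<pi> \<longleftrightarrow> (\<forall>s. is_dist (\<pi> s))"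

definition soft_V :: "real \<Rightarrow> ('s \<Rightarrow> 'a::finite \<Rightarrow> real) \<Rightarrow> ('s \<Rightarrow> 'a \<Rightarrow> real)
    \<Rightarrow> ('s \<Rightarrow> 'a \<Rightarrow> real) \<Rightarrow> 's \<Rightarrow> real" where
  "soft_V \<beta> \<mu> Q \<pi> s = (\<Sum>a\<in>UNIV. \<pi> s a * (Q s a - \<beta> * ln (\<pi> s a / \<mu> s a)))"

definition bellman_res :: "real \<Rightarrow> real \<Rightarrow> ('s::finite \<Rightarrow> 'a::finite \<Rightarrow> 's \<Rightarrow> real)
    \<Rightarrow> ('s \<Rightarrow> 'a \<Rightarrow> real) \<Rightarrow> ('s \<Rightarrow> 'a \<Rightarrow> real) \<Rightarrow> ('s \<Rightarrow> 'a \<Rightarrow> real) \<Rightarrow> 's \<Rightarrow> 'a \<Rightarrow> real" where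
  "bellman_res \<gamma> \<beta> T \<mu> Q \<pi> s a =
     Q s a - \<gamma> * (\<Sum>s'\<in>UNIV. T s a s' * soft_V \<beta> \<mu> Q \<pi> s')"

definition loss_L :: "real \<Rightarrow> real \<Rightarrow> real \<Rightarrow> ('s::finite \<Rightarrow> 'a::finite \<Rightarrow> 's \<Rightarrow> real)
    \<Rightarrow> ('s \<Rightarrow> real) \<Rightarrow> ('s \<Rightarrow> 'a \<Rightarrow> real) \<Rightarrow> ('s \<times> 'a \<Rightarrow> real) \<Rightarrow> ('s \<Rightarrow> 'a \<Rightarrow> real)
    \<Rightarrow> ('s \<Rightarrow> 'a \<Rightarrow> real) \<Rightarrow> ('s \<Rightarrow> 'a \<Rightarrow> real) \<Rightarrow> real" where
  "loss_L \<gamma> \<beta> \<alpha> T p0 \<mu> dU \<Psi> Q \<pi> =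
     (1 - \<gamma>) * (\<Sum>s\<in>UNIV. p0 s * soft_V \<beta> \<mu> Q \<pi> s)
     + (1 - \<alpha>) * (\<Sum>(s,a)\<in>UNIV. dU (s,a) *
          exp ((\<Psi> s a - bellman_res \<gamma> \<beta> T \<mu> Q \<pi> s a) / (1 - \<alpha>)))"

definition loss_L_tilde :: "real \<Rightarrow> real \<Rightarrow> real \<Rightarrow> ('s::finite \<Rightarrow> 'a::finite \<Rightarrow> 's \<Rightarrow> real)
    \<Rightarrow> ('s \<Rightarrow> real) \<Rightarrow> ('s \<Rightarrow> 'a \<Rightarrow> real) \<Rightarrow> ('s \<times> 'a \<Rightarrow> real) \<Rightarrow> ('s \<Rightarrow> 'a \<Rightarrow> real)
    \<Rightarrow> ('s \<Rightarrow> 'a \<Rightarrow> real) \<Rightarrow> ('s \<Rightarrow> 'a \<Rightarrow> real) \<Rightarrow> real" where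
  "loss_L_tilde \<gamma> \<beta> \<alpha> T p0 \<mu> dU \<Psi> Q \<pi> =
     (let \<delta> = (\<lambda>s a. exp (\<Psi> s a / (1 - \<alpha>))) in
     (1 - \<gamma>) * (\<Sum>s\<in>UNIV. p0 s * soft_V \<beta> \<mu> Q \<pi> s)
     - (\<Sum>(s,a)\<in>UNIV. dU (s,a) * (\<delta> s a * bellman_res \<gamma> \<beta> T \<mu> Q \<pi> s a))
     + (1 - \<alpha>) * (\<Sum>(s,a)\<in>UNIV. dU (s,a) * \<delta> s a))"

end

theory Submission
  imports Defs
begin

lemma pt_ineq:
  fixes c P t :: real
  assumes c: "c > 0"
  shows "c * exp (P / c) - exp (P / c) * t \<le> c * exp ((P - t) / c)"
proof -
  have e: "exp ((P - t) / c) = exp (P / c) * exp (- t / c)"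
    by (simp add: diff_divide_distrib exp_diff exp_minus field_simps)
  have "1 + (- t / c) \<le> exp (- t / c)" by (rule exp_ge_add_one_self)
  hence "c * (1 - t / c) \<le> c * exp (- t / c)" using c by simp
  moreover have "c * (1 - t / c) = c - t" using c by (simp add: field_simps)
  ultimately have "c - t \<le> c * exp (- t / c)" by simp
  hence "exp (P / c) * (c - t) \<le> exp (P / c) * (c * exp (- t / c))"
    by (simp add: mult_left_mono)
  thus ?thesis unfolding e by (simp add: algebra_simps)
qed

theorem proposition4p3:
  fixes T :: "'s::finite \<Rightarrow> 'a::finite \<Rightarrow> 's \<Rightarrow> real"
    and p0 :: "'s \<Rightarrow> real"
    and \<gamma> \<beta> \<alpha> :: real
    and \<mu> :: "'s \<Rightarrow> 'a \<Rightarrow> real"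
    and dU :: "'s \<times> 'a \<Rightarrow> real"
    and \<Psi> :: "'s \<Rightarrow> 'a \<Rightarrow> real"
  assumes T_dist: "\<And>s a. is_dist (T s a)"
    and p0_dist: "is_dist p0"
    and gamma: "0 \<le> \<gamma>" "\<gamma> < 1"
    and beta: "\<beta> > 0"
    and alpha: "0 \<le> \<alpha>" "\<alpha> < 1"
    and mu_pol: "is_policy \<mu>"
    and mu_pos: "\<And>s a. \<mu> s a > 0"
    and dU_dist: "is_dist dU"
  shows "\<forall>Q \<pi>. is_policy \<pi> \<longrightarrow>
           loss_L_tilde \<gamma> \<beta> \<alpha> T p0 \<mu> dU \<Psi> Q \<pi> \<le> loss_L \<gamma> \<beta> \<alpha> T p0 \<mu> dU \<Psi> Q \<pi>
         \<and> ((\<forall>s a. bellman_res \<gamma> \<beta> T \<mu> Q \<pi> s a = 0) \<longrightarrow>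
              loss_L_tilde \<gamma> \<beta> \<alpha> T p0 \<mu> dU \<Psi> Q \<pi> = loss_L \<gamma> \<beta> \<alpha> T p0 \<mu> dU \<Psi> Q \<pi>)"
proof (intro allI impI conjI)
  fix Q \<pi>
  let ?c = "1 - \<alpha>"
  let ?R = "bellman_res \<gamma> \<beta> T \<mu> Q \<pi>"
  have c: "?c > 0" using alpha by simp
  have d0: "\<And>x. 0 \<le> dU x" using dU_dist unfolding is_dist_def by blast
  have "(\<Sum>(s,a)\<in>UNIV. dU (s,a) * (?c * exp (\<Psi> s a / ?c)) - dU (s,a) * (exp (\<Psi> s a / ?c) * ?R s a))
      \<le> (\<Sum>(s,a)\<in>UNIV. dU (s,a) * (?c * exp ((\<Psi> s a - ?R s a) / ?c)))"
  proof (rule sum_mono, clarify)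
    fix s a
    show "dU (s,a) * (?c * exp (\<Psi> s a / ?c)) - dU (s,a) * (exp (\<Psi> s a / ?c) * ?R s a)
      \<le> dU (s,a) * (?c * exp ((\<Psi> s a - ?R s a) / ?c))"
      using mult_left_mono[OF pt_ineq[OF c, of "\<Psi> s a" "?R s a"] d0[of "(s,a)"]]
      by (simp add: algebra_simps)
  qed
  moreover have "(\<Sum>(s,a)\<in>UNIV. dU (s,a) * (?c * exp (\<Psi> s a / ?c)) - dU (s,a) * (exp (\<Psi> s a / ?c) * ?R s a))
     = ?c * (\<Sum>(s,a)\<in>UNIV. dU (s,a) * exp (\<Psi> s a / ?c)) - (\<Sum>(s,a)\<in>UNIV. dU (s,a) * (exp (\<Psi> s a / ?c) * ?R s a))"
    unfolding case_prod_unfold sum_subtractf sum_distrib_left by (simp add: algebra_simps)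
  moreover have "(\<Sum>(s,a)\<in>UNIV. dU (s,a) * (?c * exp ((\<Psi> s a - ?R s a) / ?c)))
     = ?c * (\<Sum>(s,a)\<in>UNIV. dU (s,a) * exp ((\<Psi> s a - ?R s a) / ?c))"
    unfolding case_prod_unfold sum_distrib_left by (simp add: algebra_simps)
  ultimately have "?c * (\<Sum>(s,a)\<in>UNIV. dU (s,a) * exp (\<Psi> s a / ?c)) - (\<Sum>(s,a)\<in>UNIV. dU (s,a) * (exp (\<Psi> s a / ?c) * ?R s a))
      \<le> ?c * (\<Sum>(s,a)\<in>UNIV. dU (s,a) * exp ((\<Psi> s a - ?R s a) / ?c))"
    by linarith
  thus "loss_L_tilde \<gamma> \<beta> \<alpha> T p0 \<mu> dU \<Psi> Q \<pi> \<le> loss_L \<gamma> \<beta> \<alpha> T p0 \<mu> dU \<Psi> Q \<pi>"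
    unfolding loss_L_def loss_L_tilde_def Let_def by linarith
next
  fix Q \<pi>
  assume "\<forall>s a. bellman_res \<gamma> \<beta> T \<mu> Q \<pi> s a = 0"
  thus "loss_L_tilde \<gamma> \<beta> \<alpha> T p0 \<mu> dU \<Psi> Q \<pi> = loss_L \<gamma> \<beta> \<alpha> T p0 \<mu> dU \<Psi> Q \<pi>"
    unfolding loss_L_def loss_L_tilde_def Let_def by simp
qed

end
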